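(* Let $\alpha\in(0,1]$, $\beta=1-\alpha$, and let $f:[a,b]\to\mathbb{R}$ ($a<b$) be continuous on $[a,b]$ and $\alpha$-differentiable on $(a,b)$. Then there exists $c\in(a,b)$ such that $$D^\alpha f(c)=\beta f(c)+\alpha\,\frac{f(b)-f(a)}{b-a}.$$
   Context: For a real function $f$ defined on an open interval $(a,b)$, a number $\alpha\in[0,1]$ and $\beta=1-\alpha$, the deformable derivative ($\alpha$-derivative) of $f$ at $t\in(a,b)$ is $$D^\alpha f(t)=\lim_{\epsilon\to0}\frac{(1+\epsilon\beta)f(t+\epsilon\alpha)-f(t)}{\epsilon},$$ whenever this limit exists; in that case $f$ is called $\alpha$-differentiable at $t$. $f$ is $\alpha$-differentiable on $(a,b)$ if it is so at every point of $(a,b)$. *)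

theory Defs
  imports "HOL-Analysis.Analysis"
begin

definition alpha_quot :: "real \<Rightarrow> (real \<Rightarrow> real) \<Rightarrow> real \<Rightarrow> real \<Rightarrow> real" where
  "alpha_quot \<alpha> f t \<epsilon> = ((1 + \<epsilon> * (1 - \<alpha>)) * f (t + \<epsilon> * \<alpha>) - f t) / \<epsilon>"

definition alpha_differentiable_at :: "real \<Rightarrow> (real \<Rightarrow> real) \<Rightarrow> real \<Rightarrow> bool" where
  "alpha_differentiable_at \<alpha> f t \<longleftrightarrow> (\<exists>L. (alpha_quot \<alpha> f t \<longlongrightarrow> L) (at 0))"

definition alpha_deriv :: "real \<Rightarrow> (real \<Rightarrow> real) \<Rightarrow> real \<Rightarrow> real" where
  "alpha_deriv \<alpha> f t = Lim (at 0) (alpha_quot \<alpha> f t)"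

end

theory Submission
  imports Defs
begin

lemma aux1: "e \<noteq> (0::real) \<Longrightarrow> ((1 + e * (1 - a)) * F - ft) / e - (1 - a) * F = (F - ft) / e"
  by (simp add: field_simps)

lemma aux2: "a > (0::real) \<Longrightarrow> h \<noteq> 0 \<Longrightarrow> ((f (t + h / a * a) - (ft::real)) / (h / a)) / a = (f (t + h) - ft) / h"
  by (simp add: field_simps)

lemma ev0: "(\<And>x. x \<noteq> 0 \<Longrightarrow> P x) \<Longrightarrow> eventually P (at (0::real))"
  unfolding eventually_at_filter by (rule always_eventually) blast

lemma alpha_to_deriv:
  fixes \<alpha> t L :: real and f :: "real \<Rightarrow> real"
  assumes a: "0 < \<alpha>" and c: "isCont f t" and l: "(alpha_quot \<alpha> f t \<longlongrightarrow> L) (at 0)"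
  shows "(f has_real_derivative (L - (1 - \<alpha>) * f t) / \<alpha>) (at t)"
proof -
  have cf: "((\<lambda>e. f (t + e * \<alpha>)) \<longlongrightarrow> f t) (at 0)"
  proof -
    have "((\<lambda>e. t + e * \<alpha>) \<longlongrightarrow> t + 0 * \<alpha>) (at 0)"
      by (intro tendsto_intros)
    then have "((\<lambda>e. t + e * \<alpha>) \<longlongrightarrow> t) (at 0)" by simp
    thus ?thesis using c isCont_tendsto_compose by blast
  qed
  define g where "g e = (f (t + e * \<alpha>) - f t) / e" for e
  have h1: "((\<lambda>e. alpha_quot \<alpha> f t e - (1 - \<alpha>) * f (t + e * \<alpha>)) \<longlongrightarrow> L - (1 - \<alpha>) * f t) (at 0)"
    by (intro tendsto_intros l cf)
  have e1: "\<forall>e. e \<noteq> 0 \<longrightarrow> alpha_quot \<alpha> f t e - (1 - \<alpha>) * f (t + e * \<alpha>) = g e"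
    unfolding alpha_quot_def g_def using aux1 by blast
  have h2: "\<forall>\<^sub>F e in at 0. alpha_quot \<alpha> f t e - (1 - \<alpha>) * f (t + e * \<alpha>) = g e"
    using e1 by (intro ev0) blast
  have g: "(g \<longlongrightarrow> L - (1 - \<alpha>) * f t) (at 0)"
    by (rule Lim_transform_eventually[OF h1 h2])
  have t0: "((\<lambda>h. h / \<alpha>) \<longlongrightarrow> 0 / \<alpha>) (at 0)"
    by (rule tendsto_divide[OF tendsto_ident_at tendsto_const]) (use a in simp)
  have fl: "filterlim (\<lambda>h. h / \<alpha>) (at 0) (at 0)"
  proof (rule filterlim_atI)
    show "((\<lambda>h. h / \<alpha>) \<longlongrightarrow> 0) (at 0)" using t0 by simp
    have "\<forall>h. h \<noteq> 0 \<longrightarrow> h / \<alpha> \<noteq> 0" using a by simp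
    thus "\<forall>\<^sub>F h in at 0. h / \<alpha> \<noteq> 0"
      by (intro ev0) blast
  qed
  have gc: "((\<lambda>h. g (h / \<alpha>)) \<longlongrightarrow> L - (1 - \<alpha>) * f t) (at 0)"
    using filterlim_compose[OF g fl] .
  have h3: "((\<lambda>h. g (h / \<alpha>) / \<alpha>) \<longlongrightarrow> (L - (1 - \<alpha>) * f t) / \<alpha>) (at 0)"
    by (rule tendsto_divide[OF gc tendsto_const]) (use a in simp)
  have e2: "\<forall>h. h \<noteq> 0 \<longrightarrow> g (h / \<alpha>) / \<alpha> = (f (t + h) - f t) / h"
    unfolding g_def using aux2[OF a] by blast
  have h4: "\<forall>\<^sub>F h in at 0. g (h / \<alpha>) / \<alpha> = (f (t + h) - f t) / h"
    using e2 by (intro ev0) blast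
  have "((\<lambda>h. (f (t + h) - f t) / h) \<longlongrightarrow> (L - (1 - \<alpha>) * f t) / \<alpha>) (at 0)"
    by (rule Lim_transform_eventually[OF h3 h4])
  thus ?thesis by (simp add: DERIV_def)
qed

theorem theorem3p2:
  fixes \<alpha> a b :: real and f :: "real \<Rightarrow> real"
  assumes "0 < \<alpha>" "\<alpha> \<le> 1" "a < b"
    and "continuous_on {a..b} f"
    and "\<forall>t\<in>{a<..<b}. alpha_differentiable_at \<alpha> f t"
  shows "\<exists>c\<in>{a<..<b}. alpha_deriv \<alpha> f c = (1 - \<alpha>) * f c + \<alpha> * ((f b - f a) / (b - a))"
proof -
  have cont: "isCont f t" if "t \<in> {a<..<b}" for t
  proof -
    have "t \<in> interior {a..b}" using that by (simp only: interior_atLeastAtMost_real)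
    thus ?thesis by (rule continuous_on_interior[OF assms(4)])
  qed
  have D: "\<exists>L. (alpha_quot \<alpha> f t \<longlongrightarrow> L) (at 0) \<and> (f has_real_derivative (L - (1 - \<alpha>) * f t) / \<alpha>) (at t)"
    if "t \<in> {a<..<b}" for t
  proof -
    have "alpha_differentiable_at \<alpha> f t" using assms(5) that by (rule bspec)
    then obtain L where L: "(alpha_quot \<alpha> f t \<longlongrightarrow> L) (at 0)"
      unfolding alpha_differentiable_at_def by (elim exE)
    show ?thesis by (rule exI[of _ L], rule conjI[OF L alpha_to_deriv[OF assms(1) cont[OF that] L]])
  qed
  have dif: "f differentiable (at x)" if "a < x" "x < b" for x
  proof -
    have "x \<in> {a<..<b}" using that by simp
    then obtain L where "(f has_real_derivative (L - (1 - \<alpha>) * f x) / \<alpha>) (at x)"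
      using D[OF \<open>x \<in> {a<..<b}\<close>] by (elim exE conjE)
    thus "f differentiable (at x)" unfolding real_differentiable_def by (rule exI)
  qed
  obtain l z where z: "a < z" "z < b" "DERIV f z :> l" "f b - f a = (b - a) * l"
    using MVT[OF assms(3) assms(4) dif] by blast
  have zin: "z \<in> {a<..<b}" using z(1,2) by simp
  obtain L where L: "(alpha_quot \<alpha> f z \<longlongrightarrow> L) (at 0)"
    and dz: "(f has_real_derivative (L - (1 - \<alpha>) * f z) / \<alpha>) (at z)"
    using D[OF zin] by (elim exE conjE)
  have "l = (L - (1 - \<alpha>) * f z) / \<alpha>" by (rule DERIV_unique[OF z(3) dz])
  hence "L = (1 - \<alpha>) * f z + \<alpha> * l" using assms(1) by (simp add: field_simps)
  moreover have "alpha_deriv \<alpha> f z = L"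
    unfolding alpha_deriv_def by (rule tendsto_Lim[OF _ L]) simp
  moreover have "l = (f b - f a) / (b - a)" using z(4) assms(3) by simp
  ultimately show ?thesis using zin by blast
qed

end
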